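(* Let $\varphi(x)=\sum_{i\ge0}\gamma_ix^i\in\mathbb{K}[[x]]$, let $r\in\mathbb{Z}$, and stipulate $\gamma_i=0$ for $i<0$. Then $\varphi\in\mathcal{F}_r$ if and only if the following hold. If $r=2k$ is even: for each $n\ge\max\{0,-k\}$, $$\gamma_{2n+1}=\sum_{i=-k}^n{n+k\brack i+k}\gamma_{2i},$$ and, if $k<0$, then for $0\le n\le -k-1$, $$\gamma_{2n+1}=\sum_{i=0}^n-{-k-i\brack -k-n}\gamma_{2i}.$$ If $r=2k+1$ is odd: for each $n\ge\max\{0,-k\}$, $$\gamma_{2n+1}=\sum_{i=-k}^n{n+k\brace i+k}\gamma_{2i},$$ and, if $k<0$, then for $0\le n\le -k-1$, $$\gamma_{2n+1}=\sum_{i=0}^n-{-k-i-1\brace -k-n-1}\gamma_{2i}.$$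
   Context: $\mathbb{K}\in\{\mathbb{Q},\mathbb{R},\mathbb{C}\}$. For $r\in\mathbb{Z}$, $\mathcal{F}_r$ denotes the space of $\varphi\in\mathbb{K}[[x]]$ with $\varphi(x/(x-1))=(1-x)^r\varphi(x)$. The Euler polynomials $E_n(x)$ are defined by $\frac{2e^{xt}}{e^t+1}=\sum_{n\ge0}E_n(x)\frac{t^n}{n!}$. For integers $N\ge0$, define ${N\brack j}$ by $\sum_{j=1}^N{N\brack j}x^{2j-1}=x^{2N}-E_{2N}(x)$ and ${N\brace j}$ by $\sum_{j=0}^N{N\brace j}x^{2j}=x^{2N+1}-E_{2N+1}(x)$ (negatives of the odd-degree coefficients of $E_{2N}$, resp. even-degree coefficients of $E_{2N+1}$); set ${N\brack j}=0$ for $j\le0$ or $j>N$, and ${N\brace j}=0$ for $j<0$ or $j>N$. *)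

theory Defs
  imports "HOL-Computational_Algebra.Computational_Algebra"
begin

definition F_class :: "int \<Rightarrow> 'a::field_char_0 fps set" where
  "F_class r = {\<phi>. \<phi> oo (fps_X / (fps_X - 1)) = (1 - fps_X) powi r * \<phi>}"

text \<open>Generating function 2 e^{xt}/(e^t+1), as a power series in t whose
  coefficients are polynomials in x.\<close>
definition euler_gf :: "'a::field_char_0 poly fps" where
  "euler_gf = Abs_fps (\<lambda>n. monom (inverse (fact n)) n)
              * Abs_fps (\<lambda>n. [: fps_nth (2 / (fps_exp 1 + 1) :: 'a fps) n :])"

definition euler_poly :: "nat \<Rightarrow> 'a::field_char_0 poly" where
  "euler_poly n = smult (fact n) (fps_nth euler_gf n)"

definition ebrack :: "int \<Rightarrow> int \<Rightarrow> 'a::field_char_0" where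
  "ebrack N j = (if 1 \<le> j \<and> j \<le> N
      then coeff (monom 1 (2 * nat N) - euler_poly (2 * nat N)) (nat (2 * j - 1)) else 0)"

definition ebrace :: "int \<Rightarrow> int \<Rightarrow> 'a::field_char_0" where
  "ebrace N j = (if 0 \<le> j \<and> j \<le> N
      then coeff (monom 1 (2 * nat N + 1) - euler_poly (2 * nat N + 1)) (nat (2 * j)) else 0)"

definition gam :: "'a::zero fps \<Rightarrow> int \<Rightarrow> 'a" where
  "gam \<phi> i = (if i < 0 then 0 else fps_nth \<phi> (nat i))"

end

theory Submission
  imports Defs
begin



definition tw :: "'a::field_char_0 fps \<Rightarrow> 'a fps" where "tw F = F oo (-fps_X)"
definition ff :: "'a::field_char_0 fps" where "ff = 2 / (fps_exp 1 + 1)"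
definition ec :: "nat \<Rightarrow> nat \<Rightarrow> 'a::field_char_0" where "ec n j = coeff (euler_poly n) j"

lemma tw_nth: "tw F $ n = (-1)^n * F $ n"
  by (simp add: tw_def fps_compose_uminus')

lemma tw_mult: "tw (F * G) = tw F * tw G"
  by (simp add: tw_def fps_compose_mult_distrib)

lemma ff_mult: "ff * (fps_exp 1 + 1) = (2 :: 'a::field_char_0 fps)"
proof -
  have "(fps_exp 1 + 1 :: 'a fps) $ 0 = 2" by simp
  hence "(fps_exp 1 + 1 :: 'a fps) $ 0 \<noteq> 0" by simp
  thus ?thesis unfolding ff_def
    by (simp add: fps_divide_unit mult.assoc inverse_mult_eq_1)
qed

lemma tw_ff: "tw ff = fps_exp 1 * (ff :: 'a::field_char_0 fps)"
proof -
  let ?E = "fps_exp 1 :: 'a fps"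
  have "tw (ff * (?E + 1)) = 2" by (simp add: ff_mult tw_def)
  hence "tw ff * tw (?E + 1) = 2" by (simp only: tw_mult)
  moreover have "tw (?E + 1) = fps_exp (-1) + 1"
    by (simp add: tw_def fps_compose_add_distrib)
  ultimately have "tw ff * (fps_exp (-1) + 1) = (2::'a fps)" by simp
  hence h: "tw ff * (fps_exp (-1) + 1) * ?E = 2 * ?E" by simp
  have inv: "fps_exp (-1) * ?E = 1"
    by (simp flip: fps_exp_add_mult)
  have 1: "tw ff * (1 + ?E) = 2 * ?E"
  proof -
    have "tw ff * (1 + ?E) = tw ff * (fps_exp (-1) * ?E + ?E)" by (simp only: inv)
    also have "\<dots> = tw ff * (fps_exp (-1) + 1) * ?E" by (simp add: algebra_simps)
    also have "\<dots> = 2 * ?E" by (rule h)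
    finally show ?thesis .
  qed
  have 2: "?E * ff * (1 + ?E) = 2 * ?E"
  proof -
    have "?E * ff * (1 + ?E) = ?E * (ff * (?E + 1))" by (simp add: algebra_simps)
    also have "\<dots> = ?E * 2" by (simp only: ff_mult)
    finally show ?thesis by (simp add: mult.commute)
  qed
  have "(tw ff - ?E * ff) * (?E + 1) = 0" using 1 2 by (simp add: algebra_simps)
  moreover have "?E + 1 \<noteq> 0"
  proof
    assume "?E + 1 = 0" hence "(?E + 1) $ 0 = 0" by simp
    thus False by simp
  qed
  ultimately show ?thesis by simp
qed

lemma ff_0: "(ff :: 'a::field_char_0 fps) $ 0 = 1"
proof -
  have "(ff * (fps_exp 1 + 1) :: 'a fps) $ 0 = 2" by (simp add: ff_mult)
  thus ?thesis by simp
qed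

lemma ff_even: assumes "even n" "n \<ge> 1" shows "(ff :: 'a::field_char_0 fps) $ n = 0"
proof -
  have "ff + tw ff = (2::'a fps)" using ff_mult[where 'a='a] by (simp add: tw_ff algebra_simps)
  hence "(ff + tw ff) $ n = (2::'a fps) $ n" by simp
  hence "2 * ff $ n = (0::'a)" using assms by (simp add: tw_nth fps_numeral_nth)
  thus ?thesis using assms by (simp add: fps_numeral_nth)
qed

lemma ec_eq: "ec n j = (if j \<le> n then fact n / fact j * (ff :: 'a::field_char_0 fps) $ (n - j) else 0)"
proof -
  have "coeff (euler_gf $ n) j = (if j \<le> n then inverse (fact j) * (ff :: 'a fps) $ (n - j) else 0)"
    unfolding euler_gf_def fps_mult_nth
    by (simp add: coeff_sum ff_def smult_monom monom_0 coeff_monom mult_monom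
       flip: monom_0 cong: if_cong)
  thus ?thesis by (auto simp add: ec_def euler_poly_def divide_inverse mult.commute)
qed




lemma ec_gt: "n < j \<Longrightarrow> ec n j = 0"
  by (simp add: ec_eq)

lemma ec_diag: "ec n n = (1::'a::field_char_0)"
  by (simp add: ec_eq ff_0)

lemma ec_par: "j < n \<Longrightarrow> even (n - j) \<Longrightarrow> ec n j = (0::'a::field_char_0)"
  by (simp add: ec_eq ff_even)

lemma sum_shift_zero:
  fixes g :: "nat \<Rightarrow> 'a::comm_monoid_add"
  assumes "t \<le> n" "\<And>j. j < t \<Longrightarrow> g j = 0"
  shows "(\<Sum>j\<le>n. g j) = (\<Sum>i\<le>n - t. g (i + t))"
proof -
  have "(\<Sum>j\<le>n. g j) = (\<Sum>j\<in>{t..n}. g j)"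
    by (rule sum.mono_neutral_right) (use assms in auto)
  also have "\<dots> = (\<Sum>i\<in>{0..n-t}. g (i + t))"
    using sum.shift_bounds_cl_nat_ivl[of g 0 t "n - t"] assms(1) by simp
  finally show ?thesis by (simp add: atLeast0AtMost)
qed

lemma symE:
  "(\<Sum>j\<le>n. ec n j * of_nat (j choose t) * (-1)^t) = (-1)^n * (ec n t :: 'a::field_char_0)"
proof (cases "t \<le> n")
  case False
  thus ?thesis by (auto intro!: sum.neutral simp: ec_gt)
next
  case True
  define m where "m = n - t"
  have "(\<Sum>j\<le>n. ec n j * of_nat (j choose t) * (-1)^t) =
        (\<Sum>i\<le>m. ec n (i + t) * of_nat ((i+t) choose t) * (-1::'a)^t)"
    unfolding m_def by (rule sum_shift_zero) (use True in auto)
  also have "\<dots> = (\<Sum>i\<le>m. (-1)^t * (fact n / fact t) * (1 / fact i * (ff::'a fps) $ (m - i)))"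
  proof (rule sum.cong[OF refl])
    fix i assume "i \<in> {..m}"
    hence i: "i \<le> m" by simp
    hence "i + t \<le> n" using True m_def by simp
    moreover have "n - (i + t) = m - i" using m_def by simp
    ultimately show "ec n (i + t) * of_nat ((i+t) choose t) * (-1::'a)^t =
       (-1)^t * (fact n / fact t) * (1 / fact i * (ff::'a fps) $ (m - i))"
      by (simp add: ec_eq binomial_fact field_simps)
  qed
  also have "\<dots> = (-1)^t * (fact n / fact t) * (fps_exp 1 * (ff::'a fps)) $ m"
    by (simp add: fps_mult_nth sum_distrib_left atLeast0AtMost)
  also have "\<dots> = (-1)^t * (fact n / fact t) * ((-1)^m * ff $ m)"
    by (simp add: tw_nth flip: tw_ff)
  also have "\<dots> = (-1)^n * (fact n / fact t * ff $ (n - t))"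
    using True m_def by (simp add: power_add[symmetric])
  finally show ?thesis using True by (simp add: ec_eq)
qed




lemma pos_equiv:
  fixes lam :: "nat \<Rightarrow> 'a::field_char_0" and e :: nat
  shows "(\<forall>p. (\<Sum>j\<le>p. of_nat (p choose j) * (-1)^j * lam j) = (-1)^e * lam p) \<longleftrightarrow>
         (\<forall>n. odd (n + e) \<longrightarrow> (\<Sum>j\<le>n. ec n j * lam j) = 0)"
proof -
  define M :: "'a fps" where "M = Abs_fps (\<lambda>q. lam q / fact q)"
  define P where "P = M * ff"
  let ?E = "fps_exp 1 :: 'a fps"
  let ?c = "fps_const ((-1::'a)^e)"
  have a: "(tw M * ?E) $ p = (\<Sum>j\<le>p. of_nat (p choose j) * (-1)^j * lam j) / fact p" for p
  proof -
    have "(tw M * ?E) $ p = (\<Sum>j\<le>p. (-1)^j * lam j / fact j * (1 / fact (p - j)))"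
      by (simp add: fps_mult_nth tw_nth M_def atLeast0AtMost)
    also have "\<dots> = (\<Sum>j\<le>p. of_nat (p choose j) * (-1)^j * lam j / fact p)"
      by (rule sum.cong[OF refl]) (simp add: binomial_fact field_simps)
    finally show ?thesis by (simp add: sum_divide_distrib)
  qed
  have b: "(\<forall>p. (\<Sum>j\<le>p. of_nat (p choose j) * (-1)^j * lam j) = (-1)^e * lam p) \<longleftrightarrow>
           tw M * ?E = ?c * M"
  proof -
    have "(\<Sum>j\<le>p. of_nat (p choose j) * (-1)^j * lam j) = (-1)^e * lam p \<longleftrightarrow>
          (tw M * ?E) $ p = (?c * M) $ p" for p
      unfolding a by (simp add: M_def field_simps)
    thus ?thesis by (simp add: fps_eq_iff)
  qed
  have c: "tw M * ?E = ?c * M \<longleftrightarrow> tw P = ?c * P"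
  proof -
    have twP: "tw P = (tw M * ?E) * ff" by (simp add: P_def tw_mult tw_ff mult.assoc)
    have ff0: "(ff :: 'a fps) \<noteq> 0"
    proof assume "(ff::'a fps) = 0" hence "(ff::'a fps) $ 0 = 0" by simp thus False by (simp add: ff_0) qed
    show ?thesis
    proof
      assume h: "tw M * ?E = ?c * M" show "tw P = ?c * P" unfolding twP h by (simp add: P_def mult.assoc)
    next
      assume h: "tw P = ?c * P"
      have "(tw M * ?E - ?c * M) * ff = tw P - ?c * P" unfolding twP by (simp add: P_def algebra_simps)
      hence "(tw M * ?E - ?c * M) * ff = 0" using h by simp
      thus "tw M * ?E = ?c * M" using ff0 by simp
    qed
  qed
  have d: "tw P = ?c * P \<longleftrightarrow> (\<forall>n. odd (n + e) \<longrightarrow> P $ n = 0)"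
  proof -
    have "(-1)^n * P $ n = (-1)^e * P $ n \<longleftrightarrow> (odd (n + e) \<longrightarrow> P $ n = 0)" for n
    proof (cases "even (n + e)")
      case True
      hence "even n = even e" by auto
      hence "(-1::'a)^n = (-1)^e" by (simp add: minus_one_power_iff)
      thus ?thesis using True by simp
    next
      case False
      hence "even n = odd e" by auto
      hence "(-1::'a)^n = - ((-1)^e)" by (simp add: minus_one_power_iff)
      thus ?thesis using False by (auto simp: minus_equation_iff[of "P $ n"] )
    qed
    thus ?thesis by (simp add: fps_eq_iff tw_nth)
  qed
  have e: "P $ n = (\<Sum>j\<le>n. ec n j * lam j) / fact n" for n
  proof -
    have "P $ n = (\<Sum>j\<le>n. lam j / fact j * ff $ (n - j))"
      by (simp add: P_def fps_mult_nth M_def atLeast0AtMost)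
    also have "\<dots> = (\<Sum>j\<le>n. ec n j * lam j / fact n)"
      by (rule sum.cong[OF refl]) (simp add: ec_eq field_simps)
    finally show ?thesis by (simp add: sum_divide_distrib)
  qed
  show ?thesis unfolding b c d e by simp
qed




lemma neg_equiv:
  fixes a :: "nat \<Rightarrow> 'a::field_char_0" and D e :: nat
  assumes aD: "\<forall>s>D. a s = 0"
  shows "(\<forall>t. (\<Sum>s\<le>D. a s * of_nat (s choose t) * (-1)^t) = (-1)^e * a t) \<longleftrightarrow>
         (\<forall>j\<le>D. odd (j + e) \<longrightarrow> a j = (\<Sum>n\<le>D. if even (n + e) then a n * ec n j else 0))"
proof -
  define b where "b j = (\<Sum>n\<le>D. if even (n + e) then a n * ec n j else 0)" for j
  have b_sym: "(\<Sum>s\<le>D. b s * of_nat (s choose t) * (-1)^t) = (-1)^e * b t" for t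
  proof -
    have inner: "(\<Sum>s\<le>D. ec n s * of_nat (s choose t) * (-1::'a)^t) = (-1)^n * ec n t" if "n \<le> D" for n
    proof -
      have "(\<Sum>s\<le>D. ec n s * of_nat (s choose t) * (-1::'a)^t) = (\<Sum>s\<le>n. ec n s * of_nat (s choose t) * (-1::'a)^t)"
        by (rule sum.mono_neutral_right) (use that in \<open>auto simp: ec_gt\<close>)
      thus ?thesis by (simp add: symE)
    qed
    have "(\<Sum>s\<le>D. b s * of_nat (s choose t) * (-1)^t) =
          (\<Sum>s\<le>D. \<Sum>n\<le>D. if even (n + e) then a n * (ec n s * of_nat (s choose t) * (-1)^t) else 0)"
      unfolding b_def sum_distrib_right by (intro sum.cong refl) auto
    also have "\<dots> = (\<Sum>n\<le>D. if even (n + e) then a n * (\<Sum>s\<le>D. ec n s * of_nat (s choose t) * (-1)^t) else 0)"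
      by (subst sum.swap) (intro sum.cong refl, auto simp: sum_distrib_left)
    also have "\<dots> = (\<Sum>n\<le>D. if even (n + e) then a n * ((-1)^e * ec n t) else 0)"
    proof (rule sum.cong[OF refl])
      fix n assume "n \<in> {..D}"
      hence "n \<le> D" by simp
      moreover have "even (n + e) \<Longrightarrow> (-1::'a)^n = (-1)^e"
        by (auto simp: minus_one_power_iff)
      ultimately show "(if even (n + e) then a n * (\<Sum>s\<le>D. ec n s * of_nat (s choose t) * (-1)^t) else 0) =
         (if even (n + e) then a n * ((-1)^e * ec n t) else 0)" by (simp add: inner)
    qed
    also have "\<dots> = (-1)^e * b t"
      unfolding b_def by (simp add: sum_distrib_left if_distrib algebra_simps cong: if_cong)
    finally show ?thesis .
  qed
  have b_good: "b j = a j" if "even (j + e)" "j \<le> D" for j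
  proof -
    have "b j = (\<Sum>n\<in>{j}. if even (n + e) then a n * ec n j else 0)"
      unfolding b_def
    proof (rule sum.mono_neutral_right)
      show "\<forall>n\<in>{..D} - {j}. (if even (n + e) then a n * ec n j else 0) = 0"
      proof
        fix n assume n: "n \<in> {..D} - {j}"
        show "(if even (n + e) then a n * ec n j else 0) = 0"
        proof (cases "even (n + e)")
          case True
          hence ev: "even (n - j) \<or> even (j - n)" using that by auto
          show ?thesis
          proof (cases "n < j")
            case True thus ?thesis by (simp add: ec_gt)
          next
            case False
            hence "j < n" using n by auto
            hence "even (n - j)" using \<open>even (n+e)\<close> that by (metis add_diff_cancel_right' dvd_diff_nat even_add le_add_diff_inverse2 nat_less_le)
            thus ?thesis using \<open>j < n\<close> by (simp add: ec_par)
          qed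
        qed simp
      qed
    qed (use that in auto)
    thus ?thesis using that by (simp add: ec_diag)
  qed
  have b_big: "b j = 0" if "D < j" for j
    unfolding b_def by (rule sum.neutral) (use that in \<open>auto simp: ec_gt\<close>)
  show ?thesis
  proof
    assume sym: "\<forall>t. (\<Sum>s\<le>D. a s * of_nat (s choose t) * (-1)^t) = (-1)^e * a t"
    define c where "c j = a j - b j" for j
    have c_sym: "(\<Sum>s\<le>D. c s * of_nat (s choose t) * (-1)^t) = (-1)^e * c t" for t
      using sym b_sym[of t] by (simp add: c_def algebra_simps sum_subtractf)
    have c0: "\<forall>j. c j = 0"
    proof (rule ccontr)
      assume "\<not> (\<forall>j. c j = 0)"
      hence ne: "{j. c j \<noteq> 0} \<noteq> {}" by auto
      have sub: "{j. c j \<noteq> 0} \<subseteq> {..D}"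
        using aD b_big by (force simp: c_def not_less[symmetric])
      hence fin: "finite {j. c j \<noteq> 0}" using finite_subset by blast
      define d where "d = Max {j. c j \<noteq> 0}"
      have dS: "c d \<noteq> 0" using Max_in[OF fin ne] d_def by simp
      have dmax: "c s = 0" if "s > d" for s
        using Max_ge[OF fin, of s] that d_def by force
      have dD: "d \<le> D" using sub dS by auto
      have "(\<Sum>s\<le>D. c s * of_nat (s choose d) * (-1)^d) = (\<Sum>s\<in>{d}. c s * of_nat (s choose d) * (-1::'a)^d)"
        by (rule sum.mono_neutral_right) (use dD dmax in \<open>auto simp: nat_neq_iff\<close>)
      hence "(\<Sum>s\<le>D. c s * of_nat (s choose d) * (-1)^d) = (-1::'a)^d * c d" by simp
      hence "(-1)^d * c d = (-1)^e * c d" using c_sym[of d] by metis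
      hence "(-1::'a)^d = (-1)^e" using dS by simp
      hence "even (d + e)"
        by (auto simp: minus_one_power_iff split: if_splits)
      hence "c d = 0" using b_good[OF _ dD] by (simp add: c_def)
      thus False using dS by simp
    qed
    show "\<forall>j\<le>D. odd (j + e) \<longrightarrow> a j = (\<Sum>n\<le>D. if even (n + e) then a n * ec n j else 0)"
      using c0 by (simp add: c_def b_def)
  next
    assume rel: "\<forall>j\<le>D. odd (j + e) \<longrightarrow> a j = (\<Sum>n\<le>D. if even (n + e) then a n * ec n j else 0)"
    have ab: "a j = b j" for j
    proof (cases "j \<le> D")
      case True thus ?thesis using rel b_good[of j] by (cases "even (j+e)") (auto simp: b_def)
    next
      case False thus ?thesis using aD b_big by simp
    qed
    show "\<forall>t. (\<Sum>s\<le>D. a s * of_nat (s choose t) * (-1)^t) = (-1)^e * a t"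
      using b_sym by (simp add: ab)
  qed
qed




definition BB :: "'a::field_char_0 \<Rightarrow> 'a fps" where "BB a = fps_binomial a oo (-fps_X)"

lemma BB_nth: "BB a $ n = (-1)^n * (a gchoose n)"
  by (simp add: BB_def fps_compose_uminus')

lemma BB_add: "BB (a + b) = BB a * BB b"
  by (simp add: BB_def fps_binomial_add_mult fps_compose_mult_distrib)

lemma BB_0: "BB 0 = 1" by (simp add: BB_def)

lemma BB_1: "BB 1 = (1 - fps_X :: 'a::field_char_0 fps)"
  by (simp add: BB_def fps_binomial_1 fps_compose_add_distrib)

lemma BB_nat: "BB (of_nat n) = (1 - fps_X :: 'a::field_char_0 fps) ^ n"
proof (induction n)
  case 0 thus ?case by (simp add: BB_0)
next
  case (Suc n)
  have "BB (of_nat (Suc n) :: 'a) = BB (of_nat n + 1)" by (simp add: add.commute)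
  also have "\<dots> = BB (of_nat n) * BB 1" by (rule BB_add)
  finally show ?case using Suc by (simp add: BB_1 mult.commute)
qed

lemma BB_inv: "BB (- a) * BB a = 1"
  by (simp flip: BB_add add: BB_0)

lemma BB_int: "BB (of_int r) = (1 - fps_X :: 'a::field_char_0 fps) powi r"
proof (cases "r \<ge> 0")
  case True
  then obtain n where "r = int n" by (metis nonneg_eq_int)
  thus ?thesis by (simp add: BB_nat power_int_def)
next
  case False
  obtain n where n: "r = - int n" using False by (intro that[of "nat (- r)"]) simp
  have "inverse ((1 - fps_X :: 'a fps) ^ n) = BB (- of_nat n)"
  proof (rule fps_inverse_unique)
    have "BB (of_nat n) * BB (- of_nat n) = (1 :: 'a fps)" by (subst mult.commute) (rule BB_inv)
    thus "(1 - fps_X) ^ n * BB (- of_nat n) = (1 :: 'a fps)" by (simp only: BB_nat)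
  qed
  thus ?thesis using n False by (simp add: power_int_def fps_inverse_power)
qed

lemma y_eq: "(fps_X / (fps_X - 1) :: 'a::field_char_0 fps) = - fps_X * BB (-1)"
proof -
  have u: "(fps_X - 1 :: 'a fps) $ 0 \<noteq> 0" by simp
  have nz: "(fps_X - 1 :: 'a fps) \<noteq> 0" using u by auto
  have "fps_X / (fps_X - 1) * (fps_X - 1) = (fps_X :: 'a fps)"
    using u by (simp add: fps_divide_unit mult.assoc inverse_mult_eq_1)
  moreover have "(- fps_X * BB (-1)) * (fps_X - 1) = (fps_X :: 'a fps)"
  proof -
    have "(- fps_X * BB (-1)) * (fps_X - 1) = fps_X * (BB (-1) * BB 1 :: 'a fps)"
      by (simp add: BB_1 algebra_simps)
    thus ?thesis using BB_inv[of "1::'a"] by simp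
  qed
  ultimately show ?thesis using nz by (metis mult_cancel_right)
qed

lemma BB_pow: "BB (a::'a::field_char_0) ^ m = BB (of_nat m * a)"
proof (induction m)
  case 0 thus ?case by (simp add: BB_0)
next
  case (Suc m)
  have "BB a ^ Suc m = BB a * BB (of_nat m * a)" by (simp add: Suc)
  also have "\<dots> = BB (a + of_nat m * a)" by (simp only: BB_add)
  finally show ?case by (simp add: algebra_simps)
qed

lemma m1: "(-1 :: 'a::field_char_0 fps) ^ m = fps_const ((-1)^m)"
proof (induction m)
  case (Suc m)
  have "(-1 :: 'a fps) ^ Suc m = - ((-1) ^ m)" by simp
  also have "\<dots> = - fps_const ((-1)^m)" by (simp only: Suc)
  also have "\<dots> = fps_const ((-1) ^ Suc m)" by (simp add: fps_const_neg)
  finally show ?case .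
qed simp

lemma comp_swap:
  fixes G phi y :: "'a::field_char_0 fps"
  assumes y0: "y $ 0 = 0"
  shows "(G * (phi oo y)) $ N = (\<Sum>m\<le>N. phi $ m * (G * y ^ m) $ N)"
proof -
  have inner: "(phi oo y) $ n = (\<Sum>m\<le>N. phi $ m * (y ^ m) $ n)" if "n \<le> N" for n
  proof -
    have "(phi oo y) $ n = (\<Sum>m\<le>n. phi $ m * (y ^ m) $ n)"
      by (simp add: fps_compose_nth atLeast0AtMost)
    also have "\<dots> = (\<Sum>m\<le>N. phi $ m * (y ^ m) $ n)"
      by (rule sum.mono_neutral_left) (use that startsby_zero_power_prefix[OF y0] in auto)
    finally show ?thesis .
  qed
  have "(G * (phi oo y)) $ N = (\<Sum>i\<le>N. G $ i * (\<Sum>m\<le>N. phi $ m * (y ^ m) $ (N - i)))"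
    by (simp add: fps_mult_nth atLeast0AtMost inner)
  also have "\<dots> = (\<Sum>m\<le>N. phi $ m * (\<Sum>i\<le>N. G $ i * (y ^ m) $ (N - i)))"
    by (simp add: sum_distrib_left sum_distrib_right algebra_simps) (rule sum.swap)
  also have "\<dots> = (\<Sum>m\<le>N. phi $ m * (G * y ^ m) $ N)"
    by (simp add: fps_mult_nth atLeast0AtMost)
  finally show ?thesis .
qed

lemma F_rows:
  fixes phi :: "'a::field_char_0 fps"
  shows "phi \<in> F_class r \<longleftrightarrow>
    (\<forall>N. (\<Sum>m\<le>N. (-1)^N * ((- of_nat m - of_int r) gchoose (N - m)) * phi $ m) = phi $ N)"
proof -
  let ?y = "fps_X / (fps_X - 1) :: 'a fps"
  have y0: "?y $ 0 = 0" by (simp add: y_eq)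
  have step1: "phi \<in> F_class r \<longleftrightarrow> BB (- of_int r) * (phi oo ?y) = phi"
  proof -
    have "phi oo ?y = BB (of_int r) * phi \<longleftrightarrow> BB (- of_int r) * (phi oo ?y) = phi"
    proof
      assume h: "phi oo ?y = BB (of_int r) * phi"
      show "BB (- of_int r) * (phi oo ?y) = phi" unfolding h by (simp add: mult.assoc[symmetric] BB_inv)
    next
      assume h: "BB (- of_int r) * (phi oo ?y) = phi"
      have "BB (of_int r) * phi = (BB (of_int r) * BB (- of_int r)) * (phi oo ?y)"
        by (subst h[symmetric]) (simp add: mult.assoc)
      also have "\<dots> = phi oo ?y" using BB_inv[of "- of_int r :: 'a"] by simp
      finally show "phi oo ?y = BB (of_int r) * phi" by simp
    qed
    thus ?thesis by (simp add: F_class_def BB_int)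
  qed
  have coef: "(BB (- of_int r) * ?y ^ m) $ N =
      (if m \<le> N then (-1)^N * ((- of_nat m - of_int r) gchoose (N - m)) else 0)" for m N
  proof -
    have "BB (- of_int r) * ?y ^ m = fps_const ((-1)^m) * (fps_X ^ m * BB (- of_nat m - of_int r))"
    proof -
      have "?y ^ m = ((- fps_X) * BB (-1)) ^ m" by (simp add: y_eq)
      also have "\<dots> = (- fps_X) ^ m * BB (-1) ^ m" by (rule power_mult_distrib)
      also have "\<dots> = fps_const ((-1)^m) * fps_X ^ m * BB (- of_nat m)"
      proof -
        have "(- fps_X :: 'a fps) ^ m = (-1) ^ m * fps_X ^ m" by (rule power_minus)
        moreover have "BB (-1 :: 'a) ^ m = BB (- of_nat m)" by (simp add: BB_pow)
        ultimately show ?thesis by (simp only: m1)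
      qed
      finally have "BB (- of_int r) * ?y ^ m = fps_const ((-1)^m) * (fps_X ^ m * (BB (- of_nat m) * BB (- of_int r)))"
        by (simp add: algebra_simps)
      thus ?thesis by (simp add: BB_add[symmetric])
    qed
    thus ?thesis
      by (simp add: fps_X_power_mult_nth BB_nth power_add[symmetric] not_le)
  qed
  have "(BB (- of_int r) * (phi oo ?y)) $ N = (\<Sum>m\<le>N. (-1)^N * ((- of_nat m - of_int r) gchoose (N - m)) * phi $ m)" for N
    unfolding comp_swap[OF y0] by (intro sum.cong refl) (simp add: coef)
  thus ?thesis unfolding step1 by (simp add: fps_eq_iff)
qed




lemma sum_rev: fixes g :: "nat \<Rightarrow> 'a::comm_monoid_add" shows "(\<Sum>i\<le>n. g i) = (\<Sum>i\<le>n. g (n - i))"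
  using sum.atLeastAtMost_rev[of g 0 n] by (simp add: atLeast0AtMost)

lemma sum_ext_zero:
  fixes g :: "nat \<Rightarrow> 'a::comm_monoid_add"
  assumes "n \<le> M" "\<And>i. n < i \<Longrightarrow> i \<le> M \<Longrightarrow> g i = 0"
  shows "(\<Sum>i\<le>n. g i) = (\<Sum>i\<le>M. g i)"
  by (rule sum.mono_neutral_left) (use assms in auto)

definition Row :: "'a::field_char_0 fps \<Rightarrow> int \<Rightarrow> nat \<Rightarrow> bool" where
  "Row phi r N \<longleftrightarrow> (\<Sum>m\<le>N. (-1)^N * ((- of_nat m - of_int r) gchoose (N - m)) * phi $ m) = phi $ N"

lemma gam_nat[simp]: "gam phi (int n) = phi $ n"
  by (simp add: gam_def)

lemma core_pos:
  fixes phi :: "'a::field_char_0 fps"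
  assumes NP: "int N = int p - r + 1" and e: "even e \<longleftrightarrow> odd r"
  shows "Row phi r N \<longleftrightarrow>
     (\<Sum>j\<le>p. of_nat (p choose j) * (-1)^j * gam phi (int j - r + 1)) = (-1)^e * gam phi (int p - r + 1)"
proof -
  define S where "S = (\<Sum>i\<le>N + p. (-1)^i * of_nat (p choose i) * gam phi (int N - int i))"
  have row: "(\<Sum>m\<le>N. (-1)^N * ((- of_nat m - of_int r) gchoose (N - m)) * phi $ m) = (-1)^N * S"
  proof -
    have "(\<Sum>m\<le>N. (-1)^N * ((- of_nat m - of_int r) gchoose (N - m)) * phi $ m) =
          (\<Sum>m\<le>N. (-1)^N * ((-1)^(N - m) * of_nat (p choose (N - m)) * gam phi (int N - int (N - m))))"
    proof (rule sum.cong[OF refl])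
      fix m assume "m \<in> {..N}"
      hence m: "m \<le> N" by simp
      have "((- of_nat m - of_int r) gchoose (N - m) :: 'a) =
            (-1)^(N-m) * ((of_nat (N - m) - (- of_nat m - of_int r) - 1) gchoose (N - m))"
        by (rule gbinomial_negated_upper)
      also have "(of_nat (N - m) - (- of_nat m - of_int r) - 1 :: 'a) = of_nat p"
      proof -
        have "int (N - m) + int m + r - 1 = int p" using m NP by simp
        hence "(of_int (int (N - m) + int m + r - 1) :: 'a) = of_int (int p)" by simp
        thus ?thesis by (simp add: algebra_simps)
      qed
      finally show "(-1)^N * ((- of_nat m - of_int r) gchoose (N - m)) * phi $ m =
          (-1)^N * ((-1)^(N - m) * of_nat (p choose (N - m)) * gam phi (int N - int (N - m)))"
        using m by (simp add: binomial_gbinomial of_nat_diff)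
    qed
    also have "\<dots> = (-1)^N * (\<Sum>i\<le>N. (-1)^i * of_nat (p choose i) * gam phi (int N - int i))"
      by (subst sum_rev) (simp add: sum_distrib_left)
    also have "(\<Sum>i\<le>N. (-1)^i * of_nat (p choose i) * gam phi (int N - int i)) = S"
      unfolding S_def by (rule sum_ext_zero) (auto simp: gam_def)
    finally show ?thesis .
  qed
  have eq: "(\<Sum>j\<le>p. of_nat (p choose j) * (-1)^j * gam phi (int j - r + 1)) = (-1)^p * S"
  proof -
    have "(\<Sum>j\<le>p. of_nat (p choose j) * (-1)^j * gam phi (int j - r + 1)) =
          (\<Sum>i\<le>p. of_nat (p choose (p - i)) * (-1)^(p - i) * gam phi (int (p - i) - r + 1))"
      by (rule sum_rev)
    also have "\<dots> = (\<Sum>i\<le>p. (-1)^p * ((-1)^i * of_nat (p choose i) * gam phi (int N - int i)))"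
    proof (rule sum.cong[OF refl])
      fix i assume "i \<in> {..p}"
      hence i: "i \<le> p" by simp
      have "(-1::'a)^(p - i) = (-1)^p * (-1)^i"
        using i by (simp add: neg_one_power_add_eq_neg_one_power_diff[symmetric] power_add)
      moreover have "gam phi (int (p - i) - r + 1) = gam phi (int N - int i)"
        by (rule arg_cong[where f="gam phi"]) (use i NP in simp)
      ultimately show "of_nat (p choose (p - i)) * (-1)^(p - i) * gam phi (int (p - i) - r + 1) =
          (-1)^p * ((-1)^i * of_nat (p choose i) * gam phi (int N - int i))"
        using i by (simp add: binomial_symmetric[OF i, symmetric])
    qed
    also have "\<dots> = (-1)^p * (\<Sum>i\<le>p. (-1)^i * of_nat (p choose i) * gam phi (int N - int i))"
      by (simp add: sum_distrib_left)
    also have "(\<Sum>i\<le>p. (-1)^i * of_nat (p choose i) * gam phi (int N - int i)) = S"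
      unfolding S_def by (rule sum_ext_zero) auto
    finally show ?thesis .
  qed
  have sgn: "(-1::'a)^p = (-1)^N * (-1)^e"
  proof -
    have "even p \<longleftrightarrow> even (N + e)" using NP e by presburger
    thus ?thesis by (simp add: minus_one_power_iff power_add[symmetric])
  qed
  have gN: "gam phi (int p - r + 1) = phi $ N" using NP by (simp flip: NP)
  show ?thesis unfolding Row_def row eq gN sgn
    by (auto simp: minus_one_power_iff)
qed

lemma pos_rows:
  fixes phi :: "'a::field_char_0 fps"
  assumes e: "even e \<longleftrightarrow> odd r"
  shows "(\<forall>N. int N + r - 1 \<ge> 0 \<longrightarrow> Row phi r N) \<longleftrightarrow>
    (\<forall>p. (\<Sum>j\<le>p. of_nat (p choose j) * (-1)^j * gam phi (int j - r + 1)) = (-1)^e * gam phi (int p - r + 1))"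
proof
  assume H: "\<forall>N. int N + r - 1 \<ge> 0 \<longrightarrow> Row phi r N"
  show "\<forall>p. (\<Sum>j\<le>p. of_nat (p choose j) * (-1)^j * gam phi (int j - r + 1)) = (-1)^e * gam phi (int p - r + 1)"
  proof
    fix p
    show "(\<Sum>j\<le>p. of_nat (p choose j) * (-1)^j * gam phi (int j - r + 1)) = (-1)^e * gam phi (int p - r + 1)"
    proof (cases "int p - r + 1 \<ge> 0")
      case True
      define N where "N = nat (int p - r + 1)"
      have NP: "int N = int p - r + 1" using True N_def by simp
      have "Row phi r N" using H NP by simp
      thus ?thesis using core_pos[OF NP e, of phi] by blast
    next
      case False
      have "(\<Sum>j\<le>p. of_nat (p choose j) * (-1)^j * gam phi (int j - r + 1)) = 0"
        by (rule sum.neutral) (use False in \<open>auto simp: gam_def\<close>)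
      thus ?thesis using False by (simp add: gam_def)
    qed
  qed
next
  assume H: "\<forall>p. (\<Sum>j\<le>p. of_nat (p choose j) * (-1)^j * gam phi (int j - r + 1)) = (-1)^e * gam phi (int p - r + 1)"
  show "\<forall>N. int N + r - 1 \<ge> 0 \<longrightarrow> Row phi r N"
  proof (intro allI impI)
    fix N assume N: "int N + r - 1 \<ge> 0"
    define p where "p = nat (int N + r - 1)"
    have NP: "int N = int p - r + 1" using N p_def by simp
    show "Row phi r N" using core_pos[OF NP e, of phi] H by blast
  qed
qed

lemma core_neg:
  fixes phi :: "'a::field_char_0 fps"
  assumes N: "N \<le> R" and r: "r = - int R"
    and a_def: "a = (\<lambda>s. if s \<le> R then phi $ (R - s) else 0)"
  shows "Row phi r N \<longleftrightarrow>
    (\<Sum>s\<le>R. a s * of_nat (s choose (R - N)) * (-1)^(R - N)) = (-1)^R * a (R - N)"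
proof -
  define T where "T = (\<Sum>m\<le>N. of_nat ((R - m) choose (N - m)) * phi $ m)"
  have row: "(\<Sum>m\<le>N. (-1)^N * ((- of_nat m - of_int r) gchoose (N - m)) * phi $ m) = (-1)^N * T"
  proof -
    have "(\<Sum>m\<le>N. (-1)^N * ((- of_nat m - of_int r) gchoose (N - m)) * phi $ m) =
          (\<Sum>m\<le>N. (-1)^N * (of_nat ((R - m) choose (N - m)) * phi $ m))"
    proof (rule sum.cong[OF refl])
      fix m assume "m \<in> {..N}"
      hence m: "m \<le> N" by simp
      have "(- of_nat m - of_int r :: 'a) = of_nat (R - m)"
        using m N r by (simp add: of_nat_diff)
      thus "(-1)^N * ((- of_nat m - of_int r) gchoose (N - m)) * phi $ m =
          (-1)^N * (of_nat ((R - m) choose (N - m)) * phi $ m)"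
        by (simp add: binomial_gbinomial)
    qed
    thus ?thesis by (simp add: T_def sum_distrib_left)
  qed
  have sym: "(\<Sum>s\<le>R. a s * of_nat (s choose (R - N)) * (-1)^(R - N)) = (-1)^(R - N) * T"
  proof -
    have "(\<Sum>s\<le>R. a s * of_nat (s choose (R - N)) * (-1)^(R - N)) =
          (\<Sum>m\<le>R. a (R - m) * of_nat ((R - m) choose (R - N)) * (-1)^(R - N))"
      by (rule sum_rev)
    also have "\<dots> = (\<Sum>m\<le>R. (-1)^(R - N) * (of_nat ((R - m) choose (R - N)) * phi $ m))"
      by (rule sum.cong[OF refl]) (auto simp: a_def)
    also have "\<dots> = (\<Sum>m\<le>N. (-1)^(R - N) * (of_nat ((R - m) choose (N - m)) * phi $ m))"
    proof -
      have "(\<Sum>m\<le>R. (-1)^(R - N) * (of_nat ((R - m) choose (R - N)) * phi $ m)) =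
            (\<Sum>m\<le>N. (-1)^(R - N) * (of_nat ((R - m) choose (R - N)) * (phi $ m :: 'a)))"
        by (rule sum_ext_zero[symmetric]) (use N in auto)
      also have "\<dots> = (\<Sum>m\<le>N. (-1)^(R - N) * (of_nat ((R - m) choose (N - m)) * phi $ m))"
      proof (rule sum.cong[OF refl])
        fix m assume "m \<in> {..N}"
        hence m: "m \<le> N" by simp
        have "(R - m) choose (R - N) = (R - m) choose ((R - m) - (R - N))"
          by (rule binomial_symmetric) (use m N in simp)
        also have "(R - m) - (R - N) = N - m" using m N by simp
        finally show "(-1)^(R - N) * (of_nat ((R - m) choose (R - N)) * (phi $ m :: 'a)) =
            (-1)^(R - N) * (of_nat ((R - m) choose (N - m)) * phi $ m)" by simp
      qed
      finally show ?thesis .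
    qed
    finally show ?thesis by (simp add: T_def sum_distrib_left)
  qed
  have aRN: "a (R - N) = phi $ N" using N by (simp add: a_def)
  have sg: "(-1::'a)^(R - N) = (-1)^R * (-1)^N"
    using N by (simp add: neg_one_power_add_eq_neg_one_power_diff[symmetric] power_add)
  show ?thesis unfolding Row_def row sym aRN unfolding sg
    by (auto simp: minus_one_power_iff)
qed

lemma neg_rows:
  fixes phi :: "'a::field_char_0 fps"
  assumes r: "r = - int R"
    and a_def: "a = (\<lambda>s. if s \<le> R then phi $ (R - s) else 0)"
  shows "(\<forall>N. int N + r - 1 < 0 \<longrightarrow> Row phi r N) \<longleftrightarrow>
    (\<forall>t. (\<Sum>s\<le>R. a s * of_nat (s choose t) * (-1)^t) = (-1)^R * a t)"
proof
  assume H: "\<forall>N. int N + r - 1 < 0 \<longrightarrow> Row phi r N"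
  show "\<forall>t. (\<Sum>s\<le>R. a s * of_nat (s choose t) * (-1)^t) = (-1)^R * a t"
  proof
    fix t
    show "(\<Sum>s\<le>R. a s * of_nat (s choose t) * (-1)^t) = (-1)^R * a t"
    proof (cases "t \<le> R")
      case True
      have "Row phi r (R - t)" using H r True by simp
      moreover have "R - (R - t) = t" using True by simp
      ultimately show ?thesis using core_neg[of "R - t" R r a phi, OF _ r a_def] True by simp
    next
      case False
      thus ?thesis by (auto intro!: sum.neutral simp: a_def)
    qed
  qed
next
  assume H: "\<forall>t. (\<Sum>s\<le>R. a s * of_nat (s choose t) * (-1)^t) = (-1)^R * a t"
  show "\<forall>N. int N + r - 1 < 0 \<longrightarrow> Row phi r N"
  proof (intro allI impI)
    fix N assume "int N + r - 1 < 0"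
    hence N: "N \<le> R" using r by simp
    have "R - (R - N) = N" using N by simp
    thus "Row phi r N" using core_neg[OF N r a_def] H[rule_format, of "R - N"] by simp
  qed
qed




lemma int_sum_shift: "(\<Sum>i = a..a + int M. F i) = (\<Sum>J\<le>M. F (a + int J))"
  by (rule sum.reindex_bij_witness[of _ "\<lambda>J. a + int J" "\<lambda>i. nat (i - a)"]) auto

lemma split_even:
  fixes g :: "nat \<Rightarrow> 'a::comm_monoid_add"
  shows "(\<Sum>j\<le>2*M. g j) = (\<Sum>i\<le>M. g (2*i)) + (\<Sum>i<M. g (2*i+1))"
proof (induction M)
  case (Suc M)
  have "(\<Sum>j\<le>2*Suc M. g j) = (\<Sum>j\<le>2*M. g j) + g (2*M+1) + g (2*M+2)"
    by (simp add: add.assoc)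
  thus ?case using Suc by (simp add: ac_simps)
qed simp

lemma split_odd:
  fixes g :: "nat \<Rightarrow> 'a::comm_monoid_add"
  shows "(\<Sum>j\<le>2*M+1. g j) = (\<Sum>i\<le>M. g (2*i)) + (\<Sum>i\<le>M. g (2*i+1))"
proof -
  have "(\<Sum>j\<le>2*M+1. g j) = (\<Sum>j\<le>2*M. g j) + g (2*M+1)" by simp
  moreover have "(\<Sum>i\<le>M. g (2*i+1)) = (\<Sum>i<M. g (2*i+1)) + g (2*M+1)"
    by (simp add: lessThan_Suc_atMost[symmetric])
  ultimately show ?thesis using split_even[of g M] by (simp add: ac_simps)
qed

lemma fam1_equiv:
  fixes G :: "int \<Rightarrow> 'a::field_char_0" and b :: "int \<Rightarrow> int \<Rightarrow> 'a" and k :: int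
  assumes G0: "\<And>i. i < 0 \<Longrightarrow> G i = 0"
  shows "(\<forall>M::nat. G (2 * (int M - k) + 1) = (\<Sum>J\<le>M. b (int M) (int J) * G (2 * (int J - k)))) \<longleftrightarrow>
         (\<forall>n. n \<ge> max 0 (- k) \<longrightarrow> G (2 * n + 1) = (\<Sum>i = -k..n. b (n + k) (i + k) * G (2 * i)))"
proof -
  have sumeq: "(\<Sum>i = -k..n. b (n + k) (i + k) * G (2 * i)) =
       (\<Sum>J\<le>nat (n + k). b (n + k) (int J) * G (2 * (int J - k)))" if "n + k \<ge> 0" for n
  proof -
    have "n = - k + int (nat (n + k))" using that by simp
    hence "(\<Sum>i = -k..n. b (n + k) (i + k) * G (2 * i)) =
           (\<Sum>i = -k..- k + int (nat (n + k)). b (n + k) (i + k) * G (2 * i))" by simp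
    also have "\<dots> = (\<Sum>J\<le>nat (n + k). b (n + k) (- k + int J + k) * G (2 * (- k + int J)))"
      by (rule int_sum_shift)
    finally show ?thesis by (simp add: algebra_simps)
  qed
  show ?thesis
  proof
    assume H: "\<forall>M::nat. G (2 * (int M - k) + 1) = (\<Sum>J\<le>M. b (int M) (int J) * G (2 * (int J - k)))"
    show "\<forall>n. n \<ge> max 0 (- k) \<longrightarrow> G (2 * n + 1) = (\<Sum>i = -k..n. b (n + k) (i + k) * G (2 * i))"
    proof (intro allI impI)
      fix n assume n: "n \<ge> max 0 (- k)"
      hence nk: "n + k \<ge> 0" by simp
      have "int (nat (n + k)) = n + k" using nk by simp
      hence "G (2 * n + 1) = (\<Sum>J\<le>nat (n + k). b (n + k) (int J) * G (2 * (int J - k)))"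
        using H[rule_format, of "nat (n + k)"] by (simp add: algebra_simps)
      thus "G (2 * n + 1) = (\<Sum>i = -k..n. b (n + k) (i + k) * G (2 * i))" using sumeq[OF nk] by simp
    qed
  next
    assume H: "\<forall>n. n \<ge> max 0 (- k) \<longrightarrow> G (2 * n + 1) = (\<Sum>i = -k..n. b (n + k) (i + k) * G (2 * i))"
    show "\<forall>M::nat. G (2 * (int M - k) + 1) = (\<Sum>J\<le>M. b (int M) (int J) * G (2 * (int J - k)))"
    proof
      fix M :: nat
      show "G (2 * (int M - k) + 1) = (\<Sum>J\<le>M. b (int M) (int J) * G (2 * (int J - k)))"
      proof (cases "int M \<ge> k")
        case True
        define n where "n = int M - k"
        have n: "n \<ge> max 0 (- k)" using True n_def by simp
        have "nat (n + k) = M" using n_def by simp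
        thus ?thesis using H[rule_format, OF n] sumeq[of n] n n_def by (simp add: algebra_simps)
      next
        case False
        have "(\<Sum>J\<le>M. b (int M) (int J) * G (2 * (int J - k))) = 0"
          by (rule sum.neutral) (use False G0 in auto)
        thus ?thesis using False G0 by simp
      qed
    qed
  qed
qed




lemma ebrack_ec: "1 \<le> J \<Longrightarrow> J \<le> M \<Longrightarrow> ebrack (int M) (int J) = - (ec (2*M) (2*J-1) :: 'a::field_char_0)"
proof -
  assume J: "1 \<le> J" "J \<le> M"
  have "nat (2 * int J - 1) = 2*J - 1" using J by simp
  moreover have "2*J - 1 \<noteq> 2*M" using J by simp
  ultimately show ?thesis using J by (simp add: ebrack_def ec_def coeff_monom)
qed

lemma ebrace_ec: "J \<le> M \<Longrightarrow> ebrace (int M) (int J) = - (ec (2*M+1) (2*J) :: 'a::field_char_0)"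
proof -
  assume J: "J \<le> M"
  have "nat (2 * int J) = 2*J" by simp
  moreover have "2*J \<noteq> 2*M+1" by presburger
  ultimately show ?thesis using J by (simp add: ebrace_def ec_def coeff_monom)
qed

lemma posE_even:
  fixes phi :: "'a::field_char_0 fps" and k :: int
  shows "(\<forall>n. odd (n + 1) \<longrightarrow> (\<Sum>j\<le>n. ec n j * gam phi (int j - 2*k + 1)) = 0) \<longleftrightarrow>
    (\<forall>M::nat. gam phi (2 * (int M - k) + 1) = (\<Sum>J\<le>M. ebrack (int M) (int J) * gam phi (2 * (int J - k))))"
proof -
  let ?lam = "\<lambda>j::nat. gam phi (int j - 2*k + 1)"
  have key: "(\<Sum>j\<le>2*M. ec (2*M) j * ?lam j) =
     gam phi (2 * (int M - k) + 1) - (\<Sum>J\<le>M. ebrack (int M) (int J) * gam phi (2 * (int J - k)))" for M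
  proof -
    have ev: "(\<Sum>i\<le>M. ec (2*M) (2*i) * ?lam (2*i)) = gam phi (2 * (int M - k) + 1)"
    proof -
      have "(\<Sum>i\<le>M. ec (2*M) (2*i) * ?lam (2*i)) = (\<Sum>i\<in>{M}. ec (2*M) (2*i) * ?lam (2*i))"
      proof (rule sum.mono_neutral_right)
        show "\<forall>i\<in>{..M} - {M}. ec (2*M) (2*i) * ?lam (2*i) = 0"
        proof
          fix i assume "i \<in> {..M} - {M}"
          hence "2*i < 2*M" "even (2*M - 2*i)" by auto
          thus "ec (2*M) (2*i) * ?lam (2*i) = 0" by (simp add: ec_par)
        qed
      qed auto
      also have "\<dots> = gam phi (2 * (int M - k) + 1)" by (simp add: ec_diag algebra_simps)
      finally show ?thesis .
    qed
    have od: "(\<Sum>i<M. ec (2*M) (2*i+1) * ?lam (2*i+1)) = - (\<Sum>J\<le>M. ebrack (int M) (int J) * gam phi (2 * (int J - k)))"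
    proof -
      have "(\<Sum>J\<le>M. ebrack (int M) (int J) * gam phi (2 * (int J - k))) =
            ebrack (int M) 0 * gam phi (2 * (0 - k)) + (\<Sum>i<M. ebrack (int M) (int (Suc i)) * gam phi (2 * (int (Suc i) - k)))"
        by (subst sum.atMost_shift) simp
      also have "\<dots> = (\<Sum>i<M. - (ec (2*M) (2*i+1) * ?lam (2*i+1)))"
      proof -
        have "ebrack (int M) 0 = (0::'a)" by (simp add: ebrack_def)
        moreover have "(\<Sum>i<M. ebrack (int M) (int (Suc i)) * gam phi (2 * (int (Suc i) - k))) =
             (\<Sum>i<M. - (ec (2*M) (2*i+1) * ?lam (2*i+1)))"
        proof (rule sum.cong[OF refl])
          fix i assume "i \<in> {..<M}"
          hence i: "Suc i \<le> M" by simp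
          have "2 * (int (Suc i) - k) = int (2*i+1) - 2*k + 1" by simp
          thus "ebrack (int M) (int (Suc i)) * gam phi (2 * (int (Suc i) - k)) = - (ec (2*M) (2*i+1) * ?lam (2*i+1))"
            using ebrack_ec[of "Suc i" M, where 'a='a] i by (simp add: algebra_simps)
        qed
        ultimately show ?thesis by simp
      qed
      finally show ?thesis by (simp add: sum_negf)
    qed
    show ?thesis unfolding split_even ev od by simp
  qed
  have "(\<forall>n. odd (n + 1) \<longrightarrow> (\<Sum>j\<le>n. ec n j * ?lam j) = 0) \<longleftrightarrow> (\<forall>M. (\<Sum>j\<le>2*M. ec (2*M) j * ?lam j) = 0)"
  proof
    assume H: "\<forall>n. odd (n + 1) \<longrightarrow> (\<Sum>j\<le>n. ec n j * ?lam j) = 0"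
    show "\<forall>M. (\<Sum>j\<le>2*M. ec (2*M) j * ?lam j) = 0" using H by simp
  next
    assume H: "\<forall>M. (\<Sum>j\<le>2*M. ec (2*M) j * ?lam j) = 0"
    show "\<forall>n. odd (n + 1) \<longrightarrow> (\<Sum>j\<le>n. ec n j * ?lam j) = 0"
    proof (intro allI impI)
      fix n :: nat assume "odd (n + 1)"
      then obtain M where "n = 2*M" by (metis dvd_def even_add odd_one)
      thus "(\<Sum>j\<le>n. ec n j * ?lam j) = 0" using H by simp
    qed
  qed
  also have "\<dots> \<longleftrightarrow> (\<forall>M::nat. gam phi (2 * (int M - k) + 1) = (\<Sum>J\<le>M. ebrack (int M) (int J) * gam phi (2 * (int J - k))))"
    unfolding key by simp
  finally show ?thesis .
qed

lemma posE_odd: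
  fixes phi :: "'a::field_char_0 fps" and k :: int
  shows "(\<forall>n. odd (n + 0) \<longrightarrow> (\<Sum>j\<le>n. ec n j * gam phi (int j - (2*k+1) + 1)) = 0) \<longleftrightarrow>
    (\<forall>M::nat. gam phi (2 * (int M - k) + 1) = (\<Sum>J\<le>M. ebrace (int M) (int J) * gam phi (2 * (int J - k))))"
proof -
  let ?lam = "\<lambda>j::nat. gam phi (int j - (2*k+1) + 1)"
  have key: "(\<Sum>j\<le>2*M+1. ec (2*M+1) j * ?lam j) =
     gam phi (2 * (int M - k) + 1) - (\<Sum>J\<le>M. ebrace (int M) (int J) * gam phi (2 * (int J - k)))" for M
  proof -
    have od: "(\<Sum>i\<le>M. ec (2*M+1) (2*i+1) * ?lam (2*i+1)) = gam phi (2 * (int M - k) + 1)"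
    proof -
      have "(\<Sum>i\<le>M. ec (2*M+1) (2*i+1) * ?lam (2*i+1)) = (\<Sum>i\<in>{M}. ec (2*M+1) (2*i+1) * ?lam (2*i+1))"
      proof (rule sum.mono_neutral_right)
        show "\<forall>i\<in>{..M} - {M}. ec (2*M+1) (2*i+1) * ?lam (2*i+1) = 0"
        proof
          fix i assume "i \<in> {..M} - {M}"
          hence "2*i+1 < 2*M+1" "even (2*M+1 - (2*i+1))" by auto
          thus "ec (2*M+1) (2*i+1) * ?lam (2*i+1) = 0" by (simp add: ec_par)
        qed
      qed auto
      also have "\<dots> = gam phi (2 * (int M - k) + 1)" by (simp add: ec_diag algebra_simps)
      finally show ?thesis .
    qed
    have ev: "(\<Sum>i\<le>M. ec (2*M+1) (2*i) * ?lam (2*i)) = - (\<Sum>J\<le>M. ebrace (int M) (int J) * gam phi (2 * (int J - k)))"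
    proof -
      have "(\<Sum>J\<le>M. ebrace (int M) (int J) * gam phi (2 * (int J - k))) = (\<Sum>i\<le>M. - (ec (2*M+1) (2*i) * ?lam (2*i)))"
      proof (rule sum.cong[OF refl])
        fix i assume "i \<in> {..M}"
        hence i: "i \<le> M" by simp
        have "2 * (int i - k) = int (2*i) - (2*k+1) + 1" by simp
        thus "ebrace (int M) (int i) * gam phi (2 * (int i - k)) = - (ec (2*M+1) (2*i) * ?lam (2*i))"
          using ebrace_ec[OF i, where 'a='a] by simp
      qed
      thus ?thesis by (simp add: sum_negf)
    qed
    show ?thesis unfolding split_odd ev od by simp
  qed
  have "(\<forall>n. odd (n + 0) \<longrightarrow> (\<Sum>j\<le>n. ec n j * ?lam j) = 0) \<longleftrightarrow> (\<forall>M. (\<Sum>j\<le>2*M+1. ec (2*M+1) j * ?lam j) = 0)"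
  proof
    assume H: "\<forall>n. odd (n + 0) \<longrightarrow> (\<Sum>j\<le>n. ec n j * ?lam j) = 0"
    show "\<forall>M. (\<Sum>j\<le>2*M+1. ec (2*M+1) j * ?lam j) = 0"
    proof
      fix M :: nat
      have "odd (2*M+1+0)" by simp
      from H[rule_format, OF this] show "(\<Sum>j\<le>2*M+1. ec (2*M+1) j * ?lam j) = 0" by simp
    qed
  next
    assume H: "\<forall>M. (\<Sum>j\<le>2*M+1. ec (2*M+1) j * ?lam j) = 0"
    show "\<forall>n. odd (n + 0) \<longrightarrow> (\<Sum>j\<le>n. ec n j * ?lam j) = 0"
    proof (intro allI impI)
      fix n :: nat assume "odd (n + 0)"
      then obtain M where "n = 2*M+1" by (metis add_0_right oddE)
      thus "(\<Sum>j\<le>n. ec n j * ?lam j) = 0" using H by simp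
    qed
  qed
  also have "\<dots> \<longleftrightarrow> (\<forall>M::nat. gam phi (2 * (int M - k) + 1) = (\<Sum>J\<le>M. ebrace (int M) (int J) * gam phi (2 * (int J - k))))"
    unfolding key by simp
  finally show ?thesis .
qed




lemma ebrack_ec': "ebrack (int I) (int (J+1)) = - (ec (2*I) (2*J+1) :: 'a::field_char_0)"
proof (cases "J + 1 \<le> I")
  case True
  thus ?thesis using ebrack_ec[of "J+1" I, where 'a='a] by simp
next
  case False
  thus ?thesis by (simp add: ebrack_def ec_gt)
qed

lemma ebrace_ec': "ebrace (int I) (int J) = - (ec (2*I+1) (2*J) :: 'a::field_char_0)"
proof (cases "J \<le> I")
  case True
  thus ?thesis using ebrace_ec[of J I, where 'a='a] by simp
next
  case False
  thus ?thesis by (simp add: ebrace_def ec_gt)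
qed

lemma gam_odd: "gam phi (2 * int n + 1) = phi $ (2*n+1)"
  using gam_nat[of phi "2*n+1"] by (simp add: algebra_simps)

lemma gam_even: "gam phi (2 * int n) = phi $ (2*n)"
  using gam_nat[of phi "2*n"] by (simp add: algebra_simps)

lemma sum_int0: "(\<Sum>i = 0..int n. F i) = (\<Sum>i\<le>n. F (int i))"
  using int_sum_shift[of F 0 n] by simp

lemma negE_even:
  fixes phi :: "'a::field_char_0 fps" and k :: int
  assumes k: "k = - int K"
    and a_def: "a = (\<lambda>s. if s \<le> 2*K then phi $ (2*K - s) else 0)"
  shows "(\<forall>j\<le>2*K. odd (j + 2*K) \<longrightarrow> a j = (\<Sum>n\<le>2*K. if even (n + 2*K) then a n * ec n j else 0)) \<longleftrightarrow>
    (\<forall>n. 0 \<le> n \<and> n \<le> - k - 1 \<longrightarrow> gam phi (2 * n + 1) = (\<Sum>i = 0..n. - ebrack (- k - i) (- k - n) * gam phi (2 * i)))"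
proof -
  have cond: "(a (2*J+1) = (\<Sum>n\<le>2*K. if even (n + 2*K) then a n * ec n (2*J+1) else 0)) \<longleftrightarrow>
      (gam phi (2 * int (K - 1 - J) + 1) = (\<Sum>i = 0..int (K - 1 - J). - ebrack (- k - i) (- k - int (K - 1 - J)) * gam phi (2 * i)))"
    if J: "J < K" for J
  proof -
    define n' where "n' = K - 1 - J"
    have lhs: "a (2*J+1) = gam phi (2 * int n' + 1)"
    proof -
      have "2*K - (2*J+1) = 2 * n' + 1" using J n'_def by simp
      hence "a (2*J+1) = phi $ (2 * n' + 1)" using J by (simp add: a_def)
      thus ?thesis by (simp only: gam_odd)
    qed
    have s1: "(\<Sum>n\<le>2*K. if even (n + 2*K) then a n * ec n (2*J+1) else 0) =
              (\<Sum>I\<le>K. - ebrack (int I) (int (J+1)) * phi $ (2 * (K - I)))"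
    proof -
      have "(\<Sum>n\<le>2*K. if even (n + 2*K) then a n * ec n (2*J+1) else 0) =
            (\<Sum>I\<le>K. a (2*I) * ec (2*I) (2*J+1))"
        unfolding split_even by simp
      also have "\<dots> = (\<Sum>I\<le>K. - ebrack (int I) (int (J+1)) * phi $ (2 * (K - I)))"
      proof (rule sum.cong[OF refl])
        fix I assume "I \<in> {..K}"
        hence "I \<le> K" by simp
        moreover have "ebrack (int I) (int (J+1)) = - (ec (2*I) (2*J+1) :: 'a)" by (rule ebrack_ec')
        ultimately show "a (2*I) * ec (2*I) (2*J+1) = - ebrack (int I) (int (J+1)) * phi $ (2 * (K - I))"
          by (simp add: a_def diff_mult_distrib2)
      qed
      finally show ?thesis .
    qed
    have s2: "(\<Sum>i = 0..int n'. - ebrack (- k - i) (- k - int n') * gam phi (2 * i)) =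
              (\<Sum>I\<le>K. - ebrack (int I) (int (J+1)) * phi $ (2 * (K - I)))"
    proof -
      have "(\<Sum>i = 0..int n'. - ebrack (- k - i) (- k - int n') * gam phi (2 * i)) =
            (\<Sum>i\<le>n'. - ebrack (int (K - i)) (int (J+1)) * phi $ (2 * i))"
        unfolding sum_int0
      proof (rule sum.cong[OF refl])
        fix i assume "i \<in> {..n'}"
        hence i: "i \<le> n'" by simp
        have "- k - int i = int (K - i)" using i n'_def J k by simp
        moreover have "- k - int n' = int (J + 1)" using n'_def J k by simp
        moreover have "gam phi (2 * int i) = phi $ (2 * i)" by (metis gam_nat of_nat_mult of_nat_numeral)
        ultimately show "- ebrack (- k - int i) (- k - int n') * gam phi (2 * int i) =
             - ebrack (int (K - i)) (int (J+1)) * phi $ (2 * i)" by simp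
      qed
      also have "\<dots> = (\<Sum>i\<le>K. - ebrack (int (K - i)) (int (J+1)) * phi $ (2 * i))"
        by (rule sum_ext_zero) (use n'_def J in \<open>auto simp: ebrack_def\<close>)
      also have "\<dots> = (\<Sum>I\<le>K. - ebrack (int (K - (K - I))) (int (J+1)) * phi $ (2 * (K - I)))"
        by (rule sum_rev)
      also have "\<dots> = (\<Sum>I\<le>K. - ebrack (int I) (int (J+1)) * phi $ (2 * (K - I)))"
        by (rule sum.cong[OF refl]) auto
      finally show ?thesis .
    qed
    show ?thesis unfolding n'_def[symmetric] lhs s1 s2 by simp
  qed
  show ?thesis
  proof
    assume H: "\<forall>j\<le>2*K. odd (j + 2*K) \<longrightarrow> a j = (\<Sum>n\<le>2*K. if even (n + 2*K) then a n * ec n j else 0)"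
    show "\<forall>n. 0 \<le> n \<and> n \<le> - k - 1 \<longrightarrow> gam phi (2 * n + 1) = (\<Sum>i = 0..n. - ebrack (- k - i) (- k - n) * gam phi (2 * i))"
    proof (intro allI impI)
      fix n :: int assume n: "0 \<le> n \<and> n \<le> - k - 1"
      define J where "J = K - 1 - nat n"
      have J: "J < K" and nJ: "int (K - 1 - J) = n" using n k J_def by auto
      have "odd (2*J+1 + 2*K)" by simp
      moreover have "2*J+1 \<le> 2*K" using J by simp
      ultimately have "a (2*J+1) = (\<Sum>n\<le>2*K. if even (n + 2*K) then a n * ec n (2*J+1) else 0)"
        using H by blast
      thus "gam phi (2 * n + 1) = (\<Sum>i = 0..n. - ebrack (- k - i) (- k - n) * gam phi (2 * i))"
        using cond[OF J] nJ by simp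
    qed
  next
    assume H: "\<forall>n. 0 \<le> n \<and> n \<le> - k - 1 \<longrightarrow> gam phi (2 * n + 1) = (\<Sum>i = 0..n. - ebrack (- k - i) (- k - n) * gam phi (2 * i))"
    show "\<forall>j\<le>2*K. odd (j + 2*K) \<longrightarrow> a j = (\<Sum>n\<le>2*K. if even (n + 2*K) then a n * ec n j else 0)"
    proof (intro allI impI)
      fix j assume j: "j \<le> 2*K" and od: "odd (j + 2*K)"
      from od have "odd j" by simp
      then obtain J where jJ: "j = 2*J+1" by (rule oddE)
      hence J: "J < K" using j by simp
      have "0 \<le> int (K - 1 - J) \<and> int (K - 1 - J) \<le> - k - 1" using J k by simp
      hence G: "gam phi (2 * int (K - 1 - J) + 1) = (\<Sum>i = 0..int (K - 1 - J). - ebrack (- k - i) (- k - int (K - 1 - J)) * gam phi (2 * i))"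
        using H by blast
      show "a j = (\<Sum>n\<le>2*K. if even (n + 2*K) then a n * ec n j else 0)"
        unfolding jJ using cond[OF J] G by blast
    qed
  qed
qed


lemma negE_odd:
  fixes phi :: "'a::field_char_0 fps" and k :: int
  assumes k: "k = - int L - 1"
    and a_def: "a = (\<lambda>s. if s \<le> 2*L+1 then phi $ (2*L+1 - s) else 0)"
  shows "(\<forall>j\<le>2*L+1. odd (j + (2*L+1)) \<longrightarrow> a j = (\<Sum>n\<le>2*L+1. if even (n + (2*L+1)) then a n * ec n j else 0)) \<longleftrightarrow>
    (\<forall>n. 0 \<le> n \<and> n \<le> - k - 1 \<longrightarrow> gam phi (2 * n + 1) = (\<Sum>i = 0..n. - ebrace (- k - i - 1) (- k - n - 1) * gam phi (2 * i)))"
proof -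
  have cond: "(a (2*J) = (\<Sum>n\<le>2*L+1. if even (n + (2*L+1)) then a n * ec n (2*J) else 0)) \<longleftrightarrow>
      (gam phi (2 * int (L - J) + 1) = (\<Sum>i = 0..int (L - J). - ebrace (- k - i - 1) (- k - int (L - J) - 1) * gam phi (2 * i)))"
    if J: "J \<le> L" for J
  proof -
    define n' where "n' = L - J"
    have lhs: "a (2*J) = gam phi (2 * int n' + 1)"
    proof -
      have "2*L+1 - 2*J = 2 * n' + 1" using J n'_def by simp
      hence "a (2*J) = phi $ (2 * n' + 1)" using J by (simp add: a_def)
      thus ?thesis by (simp only: gam_odd)
    qed
    have s1: "(\<Sum>n\<le>2*L+1. if even (n + (2*L+1)) then a n * ec n (2*J) else 0) =
              (\<Sum>I\<le>L. - ebrace (int I) (int J) * phi $ (2 * (L - I)))"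
    proof -
      have "(\<Sum>n\<le>2*L+1. if even (n + (2*L+1)) then a n * ec n (2*J) else 0) =
            (\<Sum>I\<le>L. a (2*I+1) * ec (2*I+1) (2*J))"
        unfolding split_odd by simp
      also have "\<dots> = (\<Sum>I\<le>L. - ebrace (int I) (int J) * phi $ (2 * (L - I)))"
      proof (rule sum.cong[OF refl])
        fix I assume "I \<in> {..L}"
        hence I: "I \<le> L" by simp
        have "ebrace (int I) (int J) = - (ec (2*I+1) (2*J) :: 'a)" by (rule ebrace_ec')
        moreover have "2*L+1 - (2*I+1) = 2 * (L - I)" using I by simp
        ultimately show "a (2*I+1) * ec (2*I+1) (2*J) = - ebrace (int I) (int J) * phi $ (2 * (L - I))"
          using I by (simp add: a_def)
      qed
      finally show ?thesis .
    qed
    have s2: "(\<Sum>i = 0..int n'. - ebrace (- k - i - 1) (- k - int n' - 1) * gam phi (2 * i)) =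
              (\<Sum>I\<le>L. - ebrace (int I) (int J) * phi $ (2 * (L - I)))"
    proof -
      have "(\<Sum>i = 0..int n'. - ebrace (- k - i - 1) (- k - int n' - 1) * gam phi (2 * i)) =
            (\<Sum>i\<le>n'. - ebrace (int (L - i)) (int J) * phi $ (2 * i))"
        unfolding sum_int0
      proof (rule sum.cong[OF refl])
        fix i assume "i \<in> {..n'}"
        hence i: "i \<le> n'" by simp
        have "- k - int i - 1 = int (L - i)" using i n'_def J k by simp
        moreover have "- k - int n' - 1 = int J" using n'_def J k by simp
        moreover have "gam phi (2 * int i) = phi $ (2 * i)" by (rule gam_even)
        ultimately show "- ebrace (- k - int i - 1) (- k - int n' - 1) * gam phi (2 * int i) =
             - ebrace (int (L - i)) (int J) * phi $ (2 * i)" by simp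
      qed
      also have "\<dots> = (\<Sum>i\<le>L. - ebrace (int (L - i)) (int J) * phi $ (2 * i))"
        by (rule sum_ext_zero) (use n'_def J in \<open>auto simp: ebrace_def\<close>)
      also have "\<dots> = (\<Sum>I\<le>L. - ebrace (int (L - (L - I))) (int J) * phi $ (2 * (L - I)))"
        by (rule sum_rev)
      also have "\<dots> = (\<Sum>I\<le>L. - ebrace (int I) (int J) * phi $ (2 * (L - I)))"
        by (rule sum.cong[OF refl]) auto
      finally show ?thesis .
    qed
    show ?thesis unfolding n'_def[symmetric] lhs s1 s2 by simp
  qed
  show ?thesis
  proof
    assume H: "\<forall>j\<le>2*L+1. odd (j + (2*L+1)) \<longrightarrow> a j = (\<Sum>n\<le>2*L+1. if even (n + (2*L+1)) then a n * ec n j else 0)"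
    show "\<forall>n. 0 \<le> n \<and> n \<le> - k - 1 \<longrightarrow> gam phi (2 * n + 1) = (\<Sum>i = 0..n. - ebrace (- k - i - 1) (- k - n - 1) * gam phi (2 * i))"
    proof (intro allI impI)
      fix n :: int assume n: "0 \<le> n \<and> n \<le> - k - 1"
      define J where "J = L - nat n"
      have J: "J \<le> L" and nJ: "int (L - J) = n" using n k J_def by auto
      have "odd (2*J + (2*L+1))" by simp
      moreover have "2*J \<le> 2*L+1" using J by simp
      ultimately have "a (2*J) = (\<Sum>n\<le>2*L+1. if even (n + (2*L+1)) then a n * ec n (2*J) else 0)"
        using H by blast
      hence "gam phi (2 * int (L - J) + 1) = (\<Sum>i = 0..int (L - J). - ebrace (- k - i - 1) (- k - int (L - J) - 1) * gam phi (2 * i))"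
        using cond[OF J] by blast
      thus "gam phi (2 * n + 1) = (\<Sum>i = 0..n. - ebrace (- k - i - 1) (- k - n - 1) * gam phi (2 * i))"
        unfolding nJ .
    qed
  next
    assume H: "\<forall>n. 0 \<le> n \<and> n \<le> - k - 1 \<longrightarrow> gam phi (2 * n + 1) = (\<Sum>i = 0..n. - ebrace (- k - i - 1) (- k - n - 1) * gam phi (2 * i))"
    show "\<forall>j\<le>2*L+1. odd (j + (2*L+1)) \<longrightarrow> a j = (\<Sum>n\<le>2*L+1. if even (n + (2*L+1)) then a n * ec n j else 0)"
    proof (intro allI impI)
      fix j assume j: "j \<le> 2*L+1" and od: "odd (j + (2*L+1))"
      from od have "even j" by simp
      then obtain J where jJ: "j = 2*J" by (rule evenE)
      hence J: "J \<le> L" using j by simp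
      have "0 \<le> int (L - J) \<and> int (L - J) \<le> - k - 1" using J k by simp
      hence G: "gam phi (2 * int (L - J) + 1) = (\<Sum>i = 0..int (L - J). - ebrace (- k - i - 1) (- k - int (L - J) - 1) * gam phi (2 * i))"
        using H by blast
      show "a j = (\<Sum>n\<le>2*L+1. if even (n + (2*L+1)) then a n * ec n j else 0)"
        unfolding jJ using cond[OF J] G by blast
    qed
  qed
qed




lemma F_split: "phi \<in> F_class r \<longleftrightarrow>
   (\<forall>N. int N + r - 1 \<ge> 0 \<longrightarrow> Row phi r N) \<and> (\<forall>N. int N + r - 1 < 0 \<longrightarrow> Row phi r N)"
proof -
  have 1: "phi \<in> F_class r \<longleftrightarrow> (\<forall>N. Row phi r N)" unfolding F_rows Row_def ..
  have 2: "(\<forall>N. Row phi r N) \<longleftrightarrow>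
     (\<forall>N. int N + r - 1 \<ge> 0 \<longrightarrow> Row phi r N) \<and> (\<forall>N. int N + r - 1 < 0 \<longrightarrow> Row phi r N)"
  proof (intro iffI conjI allI impI)
    fix N
    assume H: "(\<forall>N. int N + r - 1 \<ge> 0 \<longrightarrow> Row phi r N) \<and> (\<forall>N. int N + r - 1 < 0 \<longrightarrow> Row phi r N)"
    show "Row phi r N"
    proof (cases "int N + r - 1 \<ge> 0")
      case True thus ?thesis using H by blast
    next
      case False hence "int N + r - 1 < 0" by simp
      thus ?thesis using H by blast
    qed
  qed auto
  show ?thesis using 1 2 by blast
qed

lemma even_thm:
  fixes phi :: "'a::field_char_0 fps"
  assumes r: "r = 2 * k"
  shows "phi \<in> F_class r \<longleftrightarrow>
    (\<forall>n. n \<ge> max 0 (- k) \<longrightarrow>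
           gam phi (2 * n + 1) = (\<Sum>i = -k..n. ebrack (n + k) (i + k) * gam phi (2 * i))) \<and>
    (k < 0 \<longrightarrow> (\<forall>n. 0 \<le> n \<and> n \<le> - k - 1 \<longrightarrow>
           gam phi (2 * n + 1) = (\<Sum>i = 0..n. - ebrack (- k - i) (- k - n) * gam phi (2 * i))))"
proof -
  have pos: "(\<forall>N. int N + r - 1 \<ge> 0 \<longrightarrow> Row phi r N) \<longleftrightarrow>
    (\<forall>n. n \<ge> max 0 (- k) \<longrightarrow>
           gam phi (2 * n + 1) = (\<Sum>i = -k..n. ebrack (n + k) (i + k) * gam phi (2 * i)))"
  proof -
    have e: "even (1::nat) \<longleftrightarrow> odd r" using r by simp
    have "(\<forall>N. int N + r - 1 \<ge> 0 \<longrightarrow> Row phi r N) \<longleftrightarrow>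
      (\<forall>p. (\<Sum>j\<le>p. of_nat (p choose j) * (-1)^j * gam phi (int j - r + 1)) = (-1)^1 * gam phi (int p - r + 1))"
      by (rule pos_rows[OF e])
    also have "\<dots> \<longleftrightarrow> (\<forall>n. odd (n + 1) \<longrightarrow> (\<Sum>j\<le>n. ec n j * gam phi (int j - r + 1)) = 0)"
      by (rule pos_equiv)
    also have "\<dots> \<longleftrightarrow> (\<forall>M::nat. gam phi (2 * (int M - k) + 1) = (\<Sum>J\<le>M. ebrack (int M) (int J) * gam phi (2 * (int J - k))))"
      unfolding r by (rule posE_even)
    also have "\<dots> \<longleftrightarrow> (\<forall>n. n \<ge> max 0 (- k) \<longrightarrow>
           gam phi (2 * n + 1) = (\<Sum>i = -k..n. ebrack (n + k) (i + k) * gam phi (2 * i)))"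
      by (rule fam1_equiv) (simp add: gam_def)
    finally show ?thesis .
  qed
  have neg: "(\<forall>N. int N + r - 1 < 0 \<longrightarrow> Row phi r N) \<longleftrightarrow>
    (k < 0 \<longrightarrow> (\<forall>n. 0 \<le> n \<and> n \<le> - k - 1 \<longrightarrow>
           gam phi (2 * n + 1) = (\<Sum>i = 0..n. - ebrack (- k - i) (- k - n) * gam phi (2 * i))))"
  proof (cases "k < 0")
    case False
    have "Row phi r N" if "int N + r - 1 < 0" for N
    proof -
      have "N = 0" "r = 0" using that False r by auto
      thus ?thesis by (simp add: Row_def)
    qed
    thus ?thesis using False by auto
  next
    case True
    define K where "K = nat (- k)"
    have k: "k = - int K" using True K_def by simp
    have r2: "r = - int (2*K)" using r k by simp
    define a where "a = (\<lambda>s. if s \<le> 2*K then phi $ (2*K - s) else 0)"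
    have "(\<forall>N. int N + r - 1 < 0 \<longrightarrow> Row phi r N) \<longleftrightarrow>
       (\<forall>t. (\<Sum>s\<le>2*K. a s * of_nat (s choose t) * (-1)^t) = (-1)^(2*K) * a t)"
      by (rule neg_rows[OF r2]) (simp add: a_def)
    also have "\<dots> \<longleftrightarrow> (\<forall>j\<le>2*K. odd (j + 2*K) \<longrightarrow> a j = (\<Sum>n\<le>2*K. if even (n + 2*K) then a n * ec n j else 0))"
      by (rule neg_equiv) (simp add: a_def)
    also have "\<dots> \<longleftrightarrow> (\<forall>n. 0 \<le> n \<and> n \<le> - k - 1 \<longrightarrow>
           gam phi (2 * n + 1) = (\<Sum>i = 0..n. - ebrack (- k - i) (- k - n) * gam phi (2 * i)))"
      by (rule negE_even[OF k a_def])
    finally show ?thesis using True by simp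
  qed
  show ?thesis unfolding F_split pos neg ..
qed

lemma odd_thm:
  fixes phi :: "'a::field_char_0 fps"
  assumes r: "r = 2 * k + 1"
  shows "phi \<in> F_class r \<longleftrightarrow>
    (\<forall>n. n \<ge> max 0 (- k) \<longrightarrow>
           gam phi (2 * n + 1) = (\<Sum>i = -k..n. ebrace (n + k) (i + k) * gam phi (2 * i))) \<and>
    (k < 0 \<longrightarrow> (\<forall>n. 0 \<le> n \<and> n \<le> - k - 1 \<longrightarrow>
           gam phi (2 * n + 1) = (\<Sum>i = 0..n. - ebrace (- k - i - 1) (- k - n - 1) * gam phi (2 * i))))"
proof -
  have pos: "(\<forall>N. int N + r - 1 \<ge> 0 \<longrightarrow> Row phi r N) \<longleftrightarrow>
    (\<forall>n. n \<ge> max 0 (- k) \<longrightarrow>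
           gam phi (2 * n + 1) = (\<Sum>i = -k..n. ebrace (n + k) (i + k) * gam phi (2 * i)))"
  proof -
    have e: "even (0::nat) \<longleftrightarrow> odd r" using r by simp
    have "(\<forall>N. int N + r - 1 \<ge> 0 \<longrightarrow> Row phi r N) \<longleftrightarrow>
      (\<forall>p. (\<Sum>j\<le>p. of_nat (p choose j) * (-1)^j * gam phi (int j - r + 1)) = (-1)^0 * gam phi (int p - r + 1))"
      by (rule pos_rows[OF e])
    also have "\<dots> \<longleftrightarrow> (\<forall>n. odd (n + 0) \<longrightarrow> (\<Sum>j\<le>n. ec n j * gam phi (int j - r + 1)) = 0)"
      by (rule pos_equiv)
    also have "\<dots> \<longleftrightarrow> (\<forall>M::nat. gam phi (2 * (int M - k) + 1) = (\<Sum>J\<le>M. ebrace (int M) (int J) * gam phi (2 * (int J - k))))"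
      unfolding r by (rule posE_odd)
    also have "\<dots> \<longleftrightarrow> (\<forall>n. n \<ge> max 0 (- k) \<longrightarrow>
           gam phi (2 * n + 1) = (\<Sum>i = -k..n. ebrace (n + k) (i + k) * gam phi (2 * i)))"
      by (rule fam1_equiv) (simp add: gam_def)
    finally show ?thesis .
  qed
  have neg: "(\<forall>N. int N + r - 1 < 0 \<longrightarrow> Row phi r N) \<longleftrightarrow>
    (k < 0 \<longrightarrow> (\<forall>n. 0 \<le> n \<and> n \<le> - k - 1 \<longrightarrow>
           gam phi (2 * n + 1) = (\<Sum>i = 0..n. - ebrace (- k - i - 1) (- k - n - 1) * gam phi (2 * i))))"
  proof (cases "k < 0")
    case False
    thus ?thesis using r by auto
  next
    case True
    define L where "L = nat (- k - 1)"
    have k: "k = - int L - 1" using True L_def by simp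
    have r2: "r = - int (2*L+1)" using r k by simp
    define a where "a = (\<lambda>s. if s \<le> 2*L+1 then phi $ (2*L+1 - s) else 0)"
    have "(\<forall>N. int N + r - 1 < 0 \<longrightarrow> Row phi r N) \<longleftrightarrow>
       (\<forall>t. (\<Sum>s\<le>2*L+1. a s * of_nat (s choose t) * (-1)^t) = (-1)^(2*L+1) * a t)"
      by (rule neg_rows[OF r2]) (simp add: a_def)
    also have "\<dots> \<longleftrightarrow> (\<forall>j\<le>2*L+1. odd (j + (2*L+1)) \<longrightarrow> a j = (\<Sum>n\<le>2*L+1. if even (n + (2*L+1)) then a n * ec n j else 0))"
      by (rule neg_equiv) (simp add: a_def)
    also have "\<dots> \<longleftrightarrow> (\<forall>n. 0 \<le> n \<and> n \<le> - k - 1 \<longrightarrow>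
           gam phi (2 * n + 1) = (\<Sum>i = 0..n. - ebrace (- k - i - 1) (- k - n - 1) * gam phi (2 * i)))"
      by (rule negE_odd[OF k a_def])
    finally show ?thesis using True by simp
  qed
  show ?thesis unfolding F_split pos neg ..
qed

theorem theorem5p3:
  fixes \<phi> :: "'a::field_char_0 fps" and r :: int
  shows "\<phi> \<in> F_class r \<longleftrightarrow>
    ((\<forall>k. r = 2 * k \<longrightarrow>
        (\<forall>n. n \<ge> max 0 (- k) \<longrightarrow>
           gam \<phi> (2 * n + 1) = (\<Sum>i = -k..n. ebrack (n + k) (i + k) * gam \<phi> (2 * i))) \<and>
        (k < 0 \<longrightarrow> (\<forall>n. 0 \<le> n \<and> n \<le> - k - 1 \<longrightarrow>
           gam \<phi> (2 * n + 1) = (\<Sum>i = 0..n. - ebrack (- k - i) (- k - n) * gam \<phi> (2 * i))))) \<and>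
     (\<forall>k. r = 2 * k + 1 \<longrightarrow>
        (\<forall>n. n \<ge> max 0 (- k) \<longrightarrow>
           gam \<phi> (2 * n + 1) = (\<Sum>i = -k..n. ebrace (n + k) (i + k) * gam \<phi> (2 * i))) \<and>
        (k < 0 \<longrightarrow> (\<forall>n. 0 \<le> n \<and> n \<le> - k - 1 \<longrightarrow>
           gam \<phi> (2 * n + 1) = (\<Sum>i = 0..n. - ebrace (- k - i - 1) (- k - n - 1) * gam \<phi> (2 * i))))))"
proof (cases "even r")
  case True
  then obtain k0 where k0: "r = 2 * k0" by (rule evenE)
  have ne: "r \<noteq> 2 * k + 1" for k using k0 by presburger
  have eqk: "r = 2 * k \<longleftrightarrow> k = k0" for k using k0 by auto
  have A: "(\<forall>k. r = 2 * k \<longrightarrow> P k) \<longleftrightarrow> P k0" for P :: "int \<Rightarrow> bool" by (simp add: eqk)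
  have B: "(\<forall>k. r = 2 * k + 1 \<longrightarrow> P k) \<longleftrightarrow> True" for P :: "int \<Rightarrow> bool" by (simp add: ne)
  show ?thesis unfolding A B even_thm[OF k0] by (rule iffI, simp, simp)
next
  case False
  then obtain k0 where k0: "r = 2 * k0 + 1" by (rule oddE)
  have ne: "r \<noteq> 2 * k" for k using k0 by presburger
  have eqk: "r = 2 * k + 1 \<longleftrightarrow> k = k0" for k using k0 by auto
  have A: "(\<forall>k. r = 2 * k + 1 \<longrightarrow> P k) \<longleftrightarrow> P k0" for P :: "int \<Rightarrow> bool" by (simp add: eqk)
  have B: "(\<forall>k. r = 2 * k \<longrightarrow> P k) \<longleftrightarrow> True" for P :: "int \<Rightarrow> bool" by (simp add: ne)
  show ?thesis unfolding A B odd_thm[OF k0] by (rule iffI, simp, simp)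
qed



end
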